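(* Let two balanced mass action chemical reaction networks (networks 1 and 2) share all their boundary chemical species $x_b\in\mathbb{R}^b_+$: network 1 has species vector $(\hat x_1,x_b)$, complex stoichiometric matrix $Z_1=\begin{bmatrix}\hat Z_1\\ Z_{b1}\end{bmatrix}$, incidence matrix $B_1$ and vector of equilibrium constants $K_1^{eq}$; network 2 has species vector $(x_b,\hat x_2)$, complex stoichiometric matrix $Z_2=\begin{bmatrix}Z_{b2}\\ \hat Z_2\end{bmatrix}$, incidence matrix $B_2$ and vector of equilibrium constants $K_2^{eq}$. Then the interconnected network is again balanced if and only if there exist $\hat x_1^{**},\hat x_2^{**},x_b^{**}$ with positive entries such that $$\mathrm{Ln}\begin{bmatrix}K_1^{eq}\\ K_2^{eq}\end{bmatrix}=\begin{bmatrix}B_1^T\hat Z_1^T & 0 & B_1^TZ_{b1}^T\\ 0 & B_2^T\hat Z_2^T & B_2^TZ_{b2}^T\end{bmatrix}\mathrm{Ln}\begin{bmatrix}\hat x_1^{**}\\ \hat x_2^{**}\\ x_b^{**}\end{bmatrix}.$$ Such a thermodynamic equilibrium of the interconnected network exists if there is a partition $\{1,\dots,b\}=I_1\cup I_2$ such that all columns of $B_1^TZ_{b1}^T$ with index in $I_1$ lie in $\operatorname{im} B_1^T\hat Z_1^T$, and all columns of $B_2^TZ_{b2}^T$ with index in $I_2$ lie in $\operatorname{im} B_2^T\hat Z_2^T$.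
   Context: A mass action network has species concentrations $x\in\mathbb{R}^m_+$, complexes (distinct left/right-hand sides of reactions) and reactions; its complex stoichiometric matrix $Z$ has as $\rho$-th column the species composition of complex $\rho$; its complex graph has an edge for each reaction $j$ from the substrate complex $\mathcal{S}_j$ to the product complex $\mathcal{P}_j$, with incidence matrix $B$ ($-1$ at tail, $+1$ at head). Rates $v_j(x)=k_j^{\mathrm{forw}}\exp(Z_{\mathcal{S}_j}^T\mathrm{Ln}(x))-k_j^{\mathrm{rev}}\exp(Z_{\mathcal{P}_j}^T\mathrm{Ln}(x))$, dynamics $\dot x=ZBv(x)$. A thermodynamic equilibrium is $x^*\in\mathbb{R}^m_+$ with $v(x^* )=0$; the network is balanced if one exists (then all $k_j^{\mathrm{forw}},k_j^{\mathrm{rev}}>0$). The vector of equilibrium constants $K^{eq}$ has entries $k_j^{\mathrm{forw}}/k_j^{\mathrm{rev}}$. $\mathrm{Ln}$ is the componentwise logarithm. The interconnected network has species vector $(\hat x_1,x_b,\hat x_2)$ (the shared species $x_b$ identified), reaction set the union of the reactions of both networks with the same rate constants, complex-graph incidence matrix $B=\begin{bmatrix}B_1&0\\0&B_2\end{bmatrix}$, and complex stoichiometric matrix $Z=\begin{bmatrix}\hat Z_1&0\\ Z_{b1}&Z_{b2}\\ 0&\hat Z_2\end{bmatrix}$; its equilibrium constant vector is $(K_1^{eq},K_2^{eq})$. *)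

theory Defs
  imports Complex_Main
begin

text \<open>A mass action network is given by: a finite set of species S (indices of the
 concentration vector), a finite set of complexes C, a finite set of reactions R,
 the complex stoichiometric matrix Z (entry Z s c = coefficient of species s in
 complex c), substrate and product complexes src j, tgt j of each reaction j,
 and forward / reverse rate constants kf, kr.\<close>

definition network_wf ::
  "'s set \<Rightarrow> 'c set \<Rightarrow> 'r set \<Rightarrow> ('s \<Rightarrow> 'c \<Rightarrow> real) \<Rightarrow> ('r \<Rightarrow> 'c) \<Rightarrow> ('r \<Rightarrow> 'c) \<Rightarrow> bool" where
  "network_wf S C R Z src tgt \<longleftrightarrow> finite S \<and> finite C \<and> finite R \<and>
     (\<forall>j\<in>R. src j \<in> C \<and> tgt j \<in> C \<and> src j \<noteq> tgt j) \<and>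
     (\<forall>s\<in>S. \<forall>c\<in>C. Z s c \<ge> 0)"

definition incid :: "('r \<Rightarrow> 'c) \<Rightarrow> ('r \<Rightarrow> 'c) \<Rightarrow> 'c \<Rightarrow> 'r \<Rightarrow> real" where
  "incid src tgt c j = (if c = tgt j then 1 else 0) - (if c = src j then 1 else 0)"

definition rate ::
  "'s set \<Rightarrow> ('s \<Rightarrow> 'c \<Rightarrow> real) \<Rightarrow> ('r \<Rightarrow> 'c) \<Rightarrow> ('r \<Rightarrow> 'c) \<Rightarrow> ('r \<Rightarrow> real) \<Rightarrow> ('r \<Rightarrow> real)
    \<Rightarrow> ('s \<Rightarrow> real) \<Rightarrow> 'r \<Rightarrow> real" where
  "rate S Z src tgt kf kr x j =
     kf j * exp (\<Sum>s\<in>S. Z s (src j) * ln (x s)) - kr j * exp (\<Sum>s\<in>S. Z s (tgt j) * ln (x s))"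

definition thermo_eq ::
  "'s set \<Rightarrow> 'r set \<Rightarrow> ('s \<Rightarrow> 'c \<Rightarrow> real) \<Rightarrow> ('r \<Rightarrow> 'c) \<Rightarrow> ('r \<Rightarrow> 'c) \<Rightarrow> ('r \<Rightarrow> real) \<Rightarrow> ('r \<Rightarrow> real)
    \<Rightarrow> ('s \<Rightarrow> real) \<Rightarrow> bool" where
  "thermo_eq S R Z src tgt kf kr x \<longleftrightarrow> (\<forall>s\<in>S. x s > 0) \<and> (\<forall>j\<in>R. rate S Z src tgt kf kr x j = 0)"

definition balanced ::
  "'s set \<Rightarrow> 'r set \<Rightarrow> ('s \<Rightarrow> 'c \<Rightarrow> real) \<Rightarrow> ('r \<Rightarrow> 'c) \<Rightarrow> ('r \<Rightarrow> 'c) \<Rightarrow> ('r \<Rightarrow> real) \<Rightarrow> ('r \<Rightarrow> real) \<Rightarrow> bool" where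
  "balanced S R Z src tgt kf kr \<longleftrightarrow> (\<forall>j\<in>R. kf j > 0 \<and> kr j > 0) \<and> (\<exists>x. thermo_eq S R Z src tgt kf kr x)"

definition Keq :: "('r \<Rightarrow> real) \<Rightarrow> ('r \<Rightarrow> real) \<Rightarrow> 'r \<Rightarrow> real" where
  "Keq kf kr j = kf j / kr j"

text \<open>(B^T Z_T^T y)_j where Z_T is the submatrix of Z with rows in the species set T.\<close>
definition BtZt ::
  "'c set \<Rightarrow> ('r \<Rightarrow> 'c) \<Rightarrow> ('r \<Rightarrow> 'c) \<Rightarrow> 's set \<Rightarrow> ('s \<Rightarrow> 'c \<Rightarrow> real) \<Rightarrow> ('s \<Rightarrow> real) \<Rightarrow> 'r \<Rightarrow> real" where
  "BtZt C src tgt T Z y j = (\<Sum>c\<in>C. incid src tgt c j * (\<Sum>s\<in>T. Z s c * y s))"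

text \<open>Column with index i (a species) of B^T Z^T, as a vector indexed by reactions.\<close>
definition BtZt_col :: "'c set \<Rightarrow> ('r \<Rightarrow> 'c) \<Rightarrow> ('r \<Rightarrow> 'c) \<Rightarrow> ('s \<Rightarrow> 'c \<Rightarrow> real) \<Rightarrow> 's \<Rightarrow> 'r \<Rightarrow> real" where
  "BtZt_col C src tgt Z i j = (\<Sum>c\<in>C. incid src tgt c j * Z i c)"

text \<open>Species of network 1 are H1 \<union> Bd, of network 2 are
 Bd \<union> H2 (shared boundary species Bd identified); complexes and reactions are the
 disjoint unions (tagged by Inl / Inr).\<close>
definition icZ :: "'s set \<Rightarrow> 's set \<Rightarrow> 's set \<Rightarrow> ('s \<Rightarrow> 'c1 \<Rightarrow> real) \<Rightarrow> ('s \<Rightarrow> 'c2 \<Rightarrow> real)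
    \<Rightarrow> 's \<Rightarrow> 'c1 + 'c2 \<Rightarrow> real" where
  "icZ H1 Bd H2 Z1 Z2 s c = (case c of
      Inl c1 \<Rightarrow> (if s \<in> H1 \<union> Bd then Z1 s c1 else 0)
    | Inr c2 \<Rightarrow> (if s \<in> Bd \<union> H2 then Z2 s c2 else 0))"

definition icMap :: "('r1 \<Rightarrow> 'c1) \<Rightarrow> ('r2 \<Rightarrow> 'c2) \<Rightarrow> 'r1 + 'r2 \<Rightarrow> 'c1 + 'c2" where
  "icMap f1 f2 j = (case j of Inl j1 \<Rightarrow> Inl (f1 j1) | Inr j2 \<Rightarrow> Inr (f2 j2))"

definition ic_balanced ::
  "'s set \<Rightarrow> 's set \<Rightarrow> 's set
   \<Rightarrow> 'r1 set \<Rightarrow> ('s \<Rightarrow> 'c1 \<Rightarrow> real) \<Rightarrow> ('r1 \<Rightarrow> 'c1) \<Rightarrow> ('r1 \<Rightarrow> 'c1) \<Rightarrow> ('r1 \<Rightarrow> real) \<Rightarrow> ('r1 \<Rightarrow> real)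
   \<Rightarrow> 'r2 set \<Rightarrow> ('s \<Rightarrow> 'c2 \<Rightarrow> real) \<Rightarrow> ('r2 \<Rightarrow> 'c2) \<Rightarrow> ('r2 \<Rightarrow> 'c2) \<Rightarrow> ('r2 \<Rightarrow> real) \<Rightarrow> ('r2 \<Rightarrow> real)
   \<Rightarrow> bool" where
  "ic_balanced H1 Bd H2 R1 Z1 src1 tgt1 kf1 kr1 R2 Z2 src2 tgt2 kf2 kr2 \<longleftrightarrow>
     balanced (H1 \<union> Bd \<union> H2) (Inl ` R1 \<union> Inr ` R2) (icZ H1 Bd H2 Z1 Z2)
       (icMap src1 src2) (icMap tgt1 tgt2) (case_sum kf1 kf2) (case_sum kr1 kr2)"

end

theory Submission
  imports Defs
begin
lemma BtZt_col_form: "BtZt C src tgt T Z y j = (\<Sum>s\<in>T. y s * BtZt_col C src tgt Z s j)"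
proof -
  have "BtZt C src tgt T Z y j = (\<Sum>c\<in>C. \<Sum>s\<in>T. incid src tgt c j * (Z s c * y s))"
    unfolding BtZt_def by (simp add: sum_distrib_left)
  also have "\<dots> = (\<Sum>s\<in>T. \<Sum>c\<in>C. incid src tgt c j * (Z s c * y s))"
    by (rule sum.swap)
  also have "\<dots> = (\<Sum>s\<in>T. y s * BtZt_col C src tgt Z s j)"
    unfolding BtZt_col_def by (simp add: sum_distrib_left mult_ac)
  finally show ?thesis .
qed

lemma BtZt_cong: "(\<And>s. s\<in>T \<Longrightarrow> y s = y' s) \<Longrightarrow> BtZt C src tgt T Z y j = BtZt C src tgt T Z y' j"
  unfolding BtZt_col_form by (rule sum.cong) auto

lemma BtZt_add: "BtZt C src tgt T Z (\<lambda>s. a s + b s) j = BtZt C src tgt T Z a j + BtZt C src tgt T Z b j"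
  unfolding BtZt_col_form by (simp add: distrib_right sum.distrib)

lemma BtZt_lincomb: "BtZt C src tgt T Z (\<lambda>s. a s - (\<Sum>i\<in>I. d i * y i s)) j
   = BtZt C src tgt T Z a j - (\<Sum>i\<in>I. d i * BtZt C src tgt T Z (y i) j)"
proof -
  have "(\<Sum>s\<in>T. (\<Sum>i\<in>I. d i * y i s) * BtZt_col C src tgt Z s j)
      = (\<Sum>s\<in>T. \<Sum>i\<in>I. d i * (y i s * BtZt_col C src tgt Z s j))"
    by (rule sum.cong) (simp_all add: sum_distrib_right mult.assoc)
  also have "\<dots> = (\<Sum>i\<in>I. \<Sum>s\<in>T. d i * (y i s * BtZt_col C src tgt Z s j))"
    by (rule sum.swap)
  also have "\<dots> = (\<Sum>i\<in>I. d i * BtZt C src tgt T Z (y i) j)"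
    unfolding BtZt_col_form by (simp add: sum_distrib_left)
  finally show ?thesis unfolding BtZt_col_form by (simp add: left_diff_distrib sum_subtractf)
qed

lemma BtZt_restrict: "finite T \<Longrightarrow> I \<subseteq> T \<Longrightarrow>
  BtZt C src tgt T Z (\<lambda>s. if s\<in>I then d s else 0) j = (\<Sum>i\<in>I. d i * BtZt_col C src tgt Z i j)"
proof -
  assume f: "finite T" and i: "I \<subseteq> T"
  have "(\<Sum>s\<in>T. (if s\<in>I then d s else 0) * BtZt_col C src tgt Z s j)
     = (\<Sum>s\<in>T. if s\<in>I then d s * BtZt_col C src tgt Z s j else 0)"
    by (rule sum.cong) auto
  also have "\<dots> = (\<Sum>s\<in>T \<inter> I. d s * BtZt_col C src tgt Z s j)"
    using f by (simp add: sum.inter_restrict)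
  also have "T \<inter> I = I" using i by auto
  finally show ?thesis unfolding BtZt_col_form .
qed

lemma sum_incid: "finite C \<Longrightarrow> src j \<in> C \<Longrightarrow> tgt j \<in> C \<Longrightarrow>
   (\<Sum>c\<in>C. incid src tgt c j * f c) = f (tgt j) - f (src j)"
proof -
  assume f: "finite C" and a: "src j \<in> C" "tgt j \<in> C"
  have "(\<Sum>c\<in>C. incid src tgt c j * f c)
     = (\<Sum>c\<in>C. (if c = tgt j then f c else 0) - (if c = src j then f c else 0))"
    by (rule sum.cong) (auto simp: incid_def)
  also have "\<dots> = f (tgt j) - f (src j)"
    using f a by (simp add: sum_subtractf sum.delta')
  finally show ?thesis .
qed

lemma BtZt_eq: "network_wf S C R Z src tgt \<Longrightarrow> j \<in> R \<Longrightarrow>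
  BtZt C src tgt T Z y j = (\<Sum>s\<in>T. Z s (tgt j) * y s) - (\<Sum>s\<in>T. Z s (src j) * y s)"
  unfolding BtZt_def network_wf_def
  by (subst sum_incid) auto

lemma rate_zero: "kf j > 0 \<Longrightarrow> kr j > 0 \<Longrightarrow>
  rate S Z src tgt kf kr x j = 0 \<longleftrightarrow>
  ln (Keq kf kr j) = (\<Sum>s\<in>S. Z s (tgt j) * ln (x s)) - (\<Sum>s\<in>S. Z s (src j) * ln (x s))"
proof -
  assume p: "kf j > 0" "kr j > 0"
  define a where "a = (\<Sum>s\<in>S. Z s (src j) * ln (x s))"
  define b where "b = (\<Sum>s\<in>S. Z s (tgt j) * ln (x s))"
  have "rate S Z src tgt kf kr x j = 0 \<longleftrightarrow> kf j * exp a = kr j * exp b"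
    unfolding rate_def a_def b_def by simp
  also have "\<dots> \<longleftrightarrow> ln (kf j * exp a) = ln (kr j * exp b)"
    using p by (simp add: ln_inj_iff)
  also have "\<dots> \<longleftrightarrow> ln (kf j) + a = ln (kr j) + b"
    using p by (simp add: ln_mult)
  also have "\<dots> \<longleftrightarrow> ln (Keq kf kr j) = b - a"
    using p unfolding Keq_def by (simp add: ln_div) linarith
  finally show ?thesis unfolding a_def b_def .
qed

lemma net_char: "network_wf S C R Z src tgt \<Longrightarrow> S = A \<union> D \<Longrightarrow> A \<inter> D = {} \<Longrightarrow> j \<in> R \<Longrightarrow>
  kf j > 0 \<Longrightarrow> kr j > 0 \<Longrightarrow>
  rate S Z src tgt kf kr x j = 0 \<longleftrightarrow>
  ln (Keq kf kr j) = BtZt C src tgt A Z (\<lambda>s. ln (x s)) j + BtZt C src tgt D Z (\<lambda>s. ln (x s)) j"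
proof -
  assume wf: "network_wf S C R Z src tgt" and S: "S = A \<union> D" and d: "A \<inter> D = {}" and j: "j \<in> R"
    and p: "kf j > 0" "kr j > 0"
  have fin: "finite A" "finite D" using wf S unfolding network_wf_def by auto
  show ?thesis
    unfolding rate_zero[of kf j kr, OF p] BtZt_eq[OF wf j] S
    using fin d by (simp add: sum.union_disjoint algebra_simps)
qed


lemma sum_icZ_l: "finite (H1 \<union> Bd) \<Longrightarrow> finite H2 \<Longrightarrow> H2 \<inter> (H1 \<union> Bd) = {} \<Longrightarrow>
  (\<Sum>s\<in>H1 \<union> Bd \<union> H2. icZ H1 Bd H2 Z1 Z2 s (Inl c) * g s) = (\<Sum>s\<in>H1 \<union> Bd. Z1 s c * g s)"
proof -
  assume f: "finite (H1 \<union> Bd)" "finite H2" and d: "H2 \<inter> (H1 \<union> Bd) = {}"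
  have "(\<Sum>s\<in>H1 \<union> Bd \<union> H2. icZ H1 Bd H2 Z1 Z2 s (Inl c) * g s)
    = (\<Sum>s\<in>H1 \<union> Bd. icZ H1 Bd H2 Z1 Z2 s (Inl c) * g s) + (\<Sum>s\<in>H2. icZ H1 Bd H2 Z1 Z2 s (Inl c) * g s)"
    using f d by (subst sum.union_disjoint) auto
  also have "(\<Sum>s\<in>H2. icZ H1 Bd H2 Z1 Z2 s (Inl c) * g s) = 0"
    using d by (intro sum.neutral) (auto simp: icZ_def)
  also have "(\<Sum>s\<in>H1 \<union> Bd. icZ H1 Bd H2 Z1 Z2 s (Inl c) * g s) = (\<Sum>s\<in>H1 \<union> Bd. Z1 s c * g s)"
    by (rule sum.cong) (auto simp: icZ_def)
  finally show ?thesis by simp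
qed

lemma sum_icZ_r: "finite (Bd \<union> H2) \<Longrightarrow> finite H1 \<Longrightarrow> H1 \<inter> (Bd \<union> H2) = {} \<Longrightarrow>
  (\<Sum>s\<in>H1 \<union> Bd \<union> H2. icZ H1 Bd H2 Z1 Z2 s (Inr c) * g s) = (\<Sum>s\<in>Bd \<union> H2. Z2 s c * g s)"
proof -
  assume f: "finite (Bd \<union> H2)" "finite H1" and d: "H1 \<inter> (Bd \<union> H2) = {}"
  have e: "H1 \<union> Bd \<union> H2 = (Bd \<union> H2) \<union> H1" by auto
  have "(\<Sum>s\<in>H1 \<union> Bd \<union> H2. icZ H1 Bd H2 Z1 Z2 s (Inr c) * g s)
    = (\<Sum>s\<in>Bd \<union> H2. icZ H1 Bd H2 Z1 Z2 s (Inr c) * g s) + (\<Sum>s\<in>H1. icZ H1 Bd H2 Z1 Z2 s (Inr c) * g s)"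
    unfolding e using f d by (subst sum.union_disjoint) auto
  also have "(\<Sum>s\<in>H1. icZ H1 Bd H2 Z1 Z2 s (Inr c) * g s) = 0"
    using d by (intro sum.neutral) (auto simp: icZ_def)
  also have "(\<Sum>s\<in>Bd \<union> H2. icZ H1 Bd H2 Z1 Z2 s (Inr c) * g s) = (\<Sum>s\<in>Bd \<union> H2. Z2 s c * g s)"
    by (rule sum.cong) (auto simp: icZ_def)
  finally show ?thesis by simp
qed

lemma rate_Inl: "finite (H1 \<union> Bd) \<Longrightarrow> finite H2 \<Longrightarrow> H2 \<inter> (H1 \<union> Bd) = {} \<Longrightarrow>
  rate (H1 \<union> Bd \<union> H2) (icZ H1 Bd H2 Z1 Z2) (icMap src1 src2) (icMap tgt1 tgt2)
     (case_sum kf1 kf2) (case_sum kr1 kr2) x (Inl j) = rate (H1 \<union> Bd) Z1 src1 tgt1 kf1 kr1 x j"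
  unfolding rate_def icMap_def by (simp add: sum_icZ_l)

lemma rate_Inr: "finite (Bd \<union> H2) \<Longrightarrow> finite H1 \<Longrightarrow> H1 \<inter> (Bd \<union> H2) = {} \<Longrightarrow>
  rate (H1 \<union> Bd \<union> H2) (icZ H1 Bd H2 Z1 Z2) (icMap src1 src2) (icMap tgt1 tgt2)
     (case_sum kf1 kf2) (case_sum kr1 kr2) x (Inr j) = rate (Bd \<union> H2) Z2 src2 tgt2 kf2 kr2 x j"
  unfolding rate_def icMap_def by (simp add: sum_icZ_r)

lemma adjust:
  assumes fD: "finite D" and I: "I \<subseteq> D"
    and eq: "ln (K j) = BtZt C src tgt A Z (\<lambda>s. ln (x s)) j + BtZt C src tgt D Z (\<lambda>s. ln (x s)) j"
    and col: "\<forall>i\<in>I. BtZt_col C src tgt Z i j = BtZt C src tgt A Z (y i) j"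
    and xb: "\<forall>s\<in>D. ln (xb s) = ln (x s) + (if s \<in> I then d s else 0)"
  shows "ln (K j) = BtZt C src tgt A Z (\<lambda>s. ln (exp (ln (x s) - (\<Sum>i\<in>I. d i * y i s)))) j
            + BtZt C src tgt D Z (\<lambda>s. ln (xb s)) j"
proof -
  have 1: "BtZt C src tgt A Z (\<lambda>s. ln (exp (ln (x s) - (\<Sum>i\<in>I. d i * y i s)))) j
     = BtZt C src tgt A Z (\<lambda>s. ln (x s)) j - (\<Sum>i\<in>I. d i * BtZt_col C src tgt Z i j)"
    using col by (simp add: BtZt_lincomb)
  have "BtZt C src tgt D Z (\<lambda>s. ln (xb s)) j
     = BtZt C src tgt D Z (\<lambda>s. ln (x s) + (if s \<in> I then d s else 0)) j"
    using xb by (intro BtZt_cong) auto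
  also have "\<dots> = BtZt C src tgt D Z (\<lambda>s. ln (x s)) j + (\<Sum>i\<in>I. d i * BtZt_col C src tgt Z i j)"
    by (simp add: BtZt_add BtZt_restrict[OF fD I])
  finally show ?thesis using 1 eq by simp
qed

theorem proposition6:
  fixes H1 Bd H2 :: "'s set"
    and C1 :: "'c1 set" and R1 :: "'r1 set" and Z1 :: "'s \<Rightarrow> 'c1 \<Rightarrow> real"
    and src1 tgt1 :: "'r1 \<Rightarrow> 'c1" and kf1 kr1 :: "'r1 \<Rightarrow> real"
    and C2 :: "'c2 set" and R2 :: "'r2 set" and Z2 :: "'s \<Rightarrow> 'c2 \<Rightarrow> real"
    and src2 tgt2 :: "'r2 \<Rightarrow> 'c2" and kf2 kr2 :: "'r2 \<Rightarrow> real"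
  assumes disj: "H1 \<inter> Bd = {}" "H2 \<inter> Bd = {}" "H1 \<inter> H2 = {}"
    and wf1: "network_wf (H1 \<union> Bd) C1 R1 Z1 src1 tgt1"
    and wf2: "network_wf (Bd \<union> H2) C2 R2 Z2 src2 tgt2"
    and bal1: "balanced (H1 \<union> Bd) R1 Z1 src1 tgt1 kf1 kr1"
    and bal2: "balanced (Bd \<union> H2) R2 Z2 src2 tgt2 kf2 kr2"
  shows
    "(ic_balanced H1 Bd H2 R1 Z1 src1 tgt1 kf1 kr1 R2 Z2 src2 tgt2 kf2 kr2 \<longleftrightarrow>
       (\<exists>xh1 xh2 xb :: 's \<Rightarrow> real.
          (\<forall>s\<in>H1. xh1 s > 0) \<and> (\<forall>s\<in>H2. xh2 s > 0) \<and> (\<forall>s\<in>Bd. xb s > 0) \<and>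
          (\<forall>j\<in>R1. ln (Keq kf1 kr1 j) =
              BtZt C1 src1 tgt1 H1 Z1 (\<lambda>s. ln (xh1 s)) j
            + BtZt C1 src1 tgt1 Bd Z1 (\<lambda>s. ln (xb s)) j) \<and>
          (\<forall>j\<in>R2. ln (Keq kf2 kr2 j) =
              BtZt C2 src2 tgt2 H2 Z2 (\<lambda>s. ln (xh2 s)) j
            + BtZt C2 src2 tgt2 Bd Z2 (\<lambda>s. ln (xb s)) j)))
     \<and>
     (\<forall>I1 I2. I1 \<union> I2 = Bd \<and> I1 \<inter> I2 = {} \<and>
        (\<forall>i\<in>I1. \<exists>y :: 's \<Rightarrow> real. \<forall>j\<in>R1.
            BtZt_col C1 src1 tgt1 Z1 i j = BtZt C1 src1 tgt1 H1 Z1 y j) \<and>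
        (\<forall>i\<in>I2. \<exists>y :: 's \<Rightarrow> real. \<forall>j\<in>R2.
            BtZt_col C2 src2 tgt2 Z2 i j = BtZt C2 src2 tgt2 H2 Z2 y j)
      \<longrightarrow> ic_balanced H1 Bd H2 R1 Z1 src1 tgt1 kf1 kr1 R2 Z2 src2 tgt2 kf2 kr2)"
proof -
  have f1: "finite (H1 \<union> Bd)" using wf1 by (simp add: network_wf_def)
  have f2: "finite (Bd \<union> H2)" using wf2 by (simp add: network_wf_def)
  have fH1: "finite H1" "finite Bd" using f1 by auto
  have fH2: "finite H2" using f2 by auto
  have d1: "H2 \<inter> (H1 \<union> Bd) = {}" and d2: "H1 \<inter> (Bd \<union> H2) = {}" using disj by auto
  have p1: "\<forall>j\<in>R1. kf1 j > 0 \<and> kr1 j > 0" using bal1 by (simp add: balanced_def)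
  have p2: "\<forall>j\<in>R2. kf2 j > 0 \<and> kr2 j > 0" using bal2 by (simp add: balanced_def)
  define P where "P x \<longleftrightarrow> (\<forall>s\<in>H1 \<union> Bd \<union> H2. (x::'s\<Rightarrow>real) s > 0) \<and>
     (\<forall>j\<in>R1. ln (Keq kf1 kr1 j) = BtZt C1 src1 tgt1 H1 Z1 (\<lambda>s. ln (x s)) j
            + BtZt C1 src1 tgt1 Bd Z1 (\<lambda>s. ln (x s)) j) \<and>
     (\<forall>j\<in>R2. ln (Keq kf2 kr2 j) = BtZt C2 src2 tgt2 H2 Z2 (\<lambda>s. ln (x s)) j
            + BtZt C2 src2 tgt2 Bd Z2 (\<lambda>s. ln (x s)) j)" for x
  have ic: "ic_balanced H1 Bd H2 R1 Z1 src1 tgt1 kf1 kr1 R2 Z2 src2 tgt2 kf2 kr2 \<longleftrightarrow> (\<exists>x. P x)"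
  proof -
    have r1: "rate (H1 \<union> Bd) Z1 src1 tgt1 kf1 kr1 x j = 0 \<longleftrightarrow>
       ln (Keq kf1 kr1 j) = BtZt C1 src1 tgt1 H1 Z1 (\<lambda>s. ln (x s)) j
            + BtZt C1 src1 tgt1 Bd Z1 (\<lambda>s. ln (x s)) j" if "j \<in> R1" for x j
      using net_char[OF wf1 refl disj(1) that] p1 that by blast
    have r2: "rate (Bd \<union> H2) Z2 src2 tgt2 kf2 kr2 x j = 0 \<longleftrightarrow>
       ln (Keq kf2 kr2 j) = BtZt C2 src2 tgt2 H2 Z2 (\<lambda>s. ln (x s)) j
            + BtZt C2 src2 tgt2 Bd Z2 (\<lambda>s. ln (x s)) j" if "j \<in> R2" for x j
      using net_char[OF wf2 Un_commute disj(2) that] p2 that by blast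
    have "thermo_eq (H1 \<union> Bd \<union> H2) (Inl ` R1 \<union> Inr ` R2) (icZ H1 Bd H2 Z1 Z2)
       (icMap src1 src2) (icMap tgt1 tgt2) (case_sum kf1 kf2) (case_sum kr1 kr2) x \<longleftrightarrow> P x" for x
    proof -
      let ?Q = "\<lambda>j. rate (H1 \<union> Bd \<union> H2) (icZ H1 Bd H2 Z1 Z2) (icMap src1 src2) (icMap tgt1 tgt2)
           (case_sum kf1 kf2) (case_sum kr1 kr2) x j = 0"
      have "(\<forall>j\<in>Inl ` R1 \<union> Inr ` R2. ?Q j) \<longleftrightarrow> (\<forall>j\<in>R1. ?Q (Inl j)) \<and> (\<forall>j\<in>R2. ?Q (Inr j))"
        by auto
      also have "\<dots> \<longleftrightarrow> (\<forall>j\<in>R1. rate (H1 \<union> Bd) Z1 src1 tgt1 kf1 kr1 x j = 0)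
            \<and> (\<forall>j\<in>R2. rate (Bd \<union> H2) Z2 src2 tgt2 kf2 kr2 x j = 0)"
        by (simp add: rate_Inl[OF f1 fH2 d1] rate_Inr[OF f2 fH1(1) d2])
      finally show ?thesis unfolding thermo_eq_def P_def using r1 r2 by auto
    qed
    moreover have "\<forall>j\<in>Inl ` R1 \<union> Inr ` R2. case_sum kf1 kf2 j > 0 \<and> case_sum kr1 kr2 j > 0"
      using p1 p2 by auto
    ultimately show ?thesis unfolding ic_balanced_def balanced_def by blast
  qed
  have A: "(\<exists>x. P x) \<longleftrightarrow> (\<exists>xh1 xh2 xb :: 's \<Rightarrow> real.
          (\<forall>s\<in>H1. xh1 s > 0) \<and> (\<forall>s\<in>H2. xh2 s > 0) \<and> (\<forall>s\<in>Bd. xb s > 0) \<and>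
          (\<forall>j\<in>R1. ln (Keq kf1 kr1 j) =
              BtZt C1 src1 tgt1 H1 Z1 (\<lambda>s. ln (xh1 s)) j
            + BtZt C1 src1 tgt1 Bd Z1 (\<lambda>s. ln (xb s)) j) \<and>
          (\<forall>j\<in>R2. ln (Keq kf2 kr2 j) =
              BtZt C2 src2 tgt2 H2 Z2 (\<lambda>s. ln (xh2 s)) j
            + BtZt C2 src2 tgt2 Bd Z2 (\<lambda>s. ln (xb s)) j))" (is "_ \<longleftrightarrow> ?E")
  proof
    assume "\<exists>x. P x"
    then obtain x where "P x" by blast
    then show ?E unfolding P_def by (intro exI[of _ x]) auto
  next
    assume ?E
    then obtain xh1 xh2 xb where h1: "\<forall>s\<in>H1. xh1 s > 0" and h2: "\<forall>s\<in>H2. xh2 s > 0"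
      and hb: "\<forall>s\<in>Bd. xb s > 0"
      and e1: "\<forall>j\<in>R1. ln (Keq kf1 kr1 j) =
              BtZt C1 src1 tgt1 H1 Z1 (\<lambda>s. ln (xh1 s)) j
            + BtZt C1 src1 tgt1 Bd Z1 (\<lambda>s. ln (xb s)) j"
      and e2: "\<forall>j\<in>R2. ln (Keq kf2 kr2 j) =
              BtZt C2 src2 tgt2 H2 Z2 (\<lambda>s. ln (xh2 s)) j
            + BtZt C2 src2 tgt2 Bd Z2 (\<lambda>s. ln (xb s)) j" by blast
    define x where "x s = (if s \<in> H1 then xh1 s else if s \<in> H2 then xh2 s else xb s)" for s
    have c1: "BtZt C T1 T2 H1 Z (\<lambda>s. ln (x s)) j = BtZt C T1 T2 H1 Z (\<lambda>s. ln (xh1 s)) j"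
      for C T1 T2 Z and j :: 'r
      by (rule BtZt_cong) (simp add: x_def)
    have c2: "BtZt C T1 T2 H2 Z (\<lambda>s. ln (x s)) j = BtZt C T1 T2 H2 Z (\<lambda>s. ln (xh2 s)) j"
      for C T1 T2 Z and j :: 'r
      using disj by (intro BtZt_cong) (auto simp: x_def)
    have cb: "BtZt C T1 T2 Bd Z (\<lambda>s. ln (x s)) j = BtZt C T1 T2 Bd Z (\<lambda>s. ln (xb s)) j"
      for C T1 T2 Z and j :: 'r
      using disj by (intro BtZt_cong) (auto simp: x_def)
    have "P x" unfolding P_def c1 c2 cb using e1 e2 h1 h2 hb by (auto simp: x_def)
    then show "\<exists>x. P x" by blast
  qed
  have B: "?E" if part: "I1 \<union> I2 = Bd" "I1 \<inter> I2 = {}"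
     and y1: "\<forall>i\<in>I1. \<exists>y :: 's \<Rightarrow> real. \<forall>j\<in>R1.
            BtZt_col C1 src1 tgt1 Z1 i j = BtZt C1 src1 tgt1 H1 Z1 y j"
     and y2: "\<forall>i\<in>I2. \<exists>y :: 's \<Rightarrow> real. \<forall>j\<in>R2.
            BtZt_col C2 src2 tgt2 Z2 i j = BtZt C2 src2 tgt2 H2 Z2 y j" for I1 I2
  proof -
    obtain Y1 where Y1: "\<forall>i\<in>I1. \<forall>j\<in>R1. BtZt_col C1 src1 tgt1 Z1 i j = BtZt C1 src1 tgt1 H1 Z1 (Y1 i) j"
      using y1 by metis
    obtain Y2 where Y2: "\<forall>i\<in>I2. \<forall>j\<in>R2. BtZt_col C2 src2 tgt2 Z2 i j = BtZt C2 src2 tgt2 H2 Z2 (Y2 i) j"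
      using y2 by metis
    obtain x1 where x1: "thermo_eq (H1 \<union> Bd) R1 Z1 src1 tgt1 kf1 kr1 x1"
      using bal1 by (auto simp: balanced_def)
    obtain x2 where x2: "thermo_eq (Bd \<union> H2) R2 Z2 src2 tgt2 kf2 kr2 x2"
      using bal2 by (auto simp: balanced_def)
    have x1p: "\<forall>s\<in>H1 \<union> Bd. x1 s > 0" using x1 by (simp add: thermo_eq_def)
    have x2p: "\<forall>s\<in>Bd \<union> H2. x2 s > 0" using x2 by (simp add: thermo_eq_def)
    have q1: "\<forall>j\<in>R1. ln (Keq kf1 kr1 j) = BtZt C1 src1 tgt1 H1 Z1 (\<lambda>s. ln (x1 s)) j
            + BtZt C1 src1 tgt1 Bd Z1 (\<lambda>s. ln (x1 s)) j"
      using x1 p1 net_char[OF wf1 refl disj(1)] by (auto simp: thermo_eq_def)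
    have q2: "\<forall>j\<in>R2. ln (Keq kf2 kr2 j) = BtZt C2 src2 tgt2 H2 Z2 (\<lambda>s. ln (x2 s)) j
            + BtZt C2 src2 tgt2 Bd Z2 (\<lambda>s. ln (x2 s)) j"
      using x2 p2 net_char[OF wf2 Un_commute disj(2)] by (auto simp: thermo_eq_def)
    define xb where "xb s = (if s \<in> I1 then x2 s else x1 s)" for s
    define d1 where "d1 s = ln (x2 s) - ln (x1 s)" for s
    define d2 where "d2 s = ln (x1 s) - ln (x2 s)" for s
    define xh1 where "xh1 s = exp (ln (x1 s) - (\<Sum>i\<in>I1. d1 i * Y1 i s))" for s
    define xh2 where "xh2 s = exp (ln (x2 s) - (\<Sum>i\<in>I2. d2 i * Y2 i s))" for s
    have xb1: "\<forall>s\<in>Bd. ln (xb s) = ln (x1 s) + (if s \<in> I1 then d1 s else 0)"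
      by (auto simp: xb_def d1_def)
    have xb2: "\<forall>s\<in>Bd. ln (xb s) = ln (x2 s) + (if s \<in> I2 then d2 s else 0)"
      using part by (auto simp: xb_def d2_def)
    have "\<forall>j\<in>R1. ln (Keq kf1 kr1 j) =
              BtZt C1 src1 tgt1 H1 Z1 (\<lambda>s. ln (xh1 s)) j
            + BtZt C1 src1 tgt1 Bd Z1 (\<lambda>s. ln (xb s)) j"
      unfolding xh1_def
      using adjust[OF fH1(2), of I1 "Keq kf1 kr1"] part q1 Y1 xb1 by blast
    moreover have "\<forall>j\<in>R2. ln (Keq kf2 kr2 j) =
              BtZt C2 src2 tgt2 H2 Z2 (\<lambda>s. ln (xh2 s)) j
            + BtZt C2 src2 tgt2 Bd Z2 (\<lambda>s. ln (xb s)) j"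
      unfolding xh2_def
      using adjust[OF fH1(2), of I2 "Keq kf2 kr2"] part q2 Y2 xb2 by blast
    moreover have "\<forall>s\<in>Bd. xb s > 0" using x1p x2p by (auto simp: xb_def)
    moreover have "\<forall>s\<in>H1. xh1 s > 0" "\<forall>s\<in>H2. xh2 s > 0" by (auto simp: xh1_def xh2_def)
    ultimately show ?E by blast
  qed
  show ?thesis using ic A B by blast
qed

end
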